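(* Let $B$ be a $p\times q$ matrix, $G$ a $q\times q$ symmetric matrix and $G'$ a $p\times p$ symmetric matrix. Let $$A=\begin{bmatrix} G' & B & B\\ B^T & 0 & G\\ B^T & G & 0\end{bmatrix}\quad ((p+2q)\times(p+2q)),\qquad C=\begin{bmatrix} G & B^T & B^T\\ B & 0 & G'\\ B & G' & 0\end{bmatrix}\quad ((2p+q)\times(2p+q)).$$ Then $A\oplus\begin{bmatrix}0 & G'\\ G' & 0\end{bmatrix}\oplus G$ and $C\oplus\begin{bmatrix}0 & G\\ G & 0\end{bmatrix}\oplus G'$ are cospectral.
   Context: For matrices $X,Y$, $X\oplus Y=\begin{bmatrix} X&0\\0&Y\end{bmatrix}$, and $0$ denotes a zero matrix of appropriate size. Two square matrices are cospectral if they have the same eigenvalues with the same multiplicities. *)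

theory Defs
  imports "Jordan_Normal_Form.Char_Poly"
begin

definition dsum :: "'a::zero mat \<Rightarrow> 'a mat \<Rightarrow> 'a mat" where
  "dsum X Y = four_block_mat X (0\<^sub>m (dim_row X) (dim_col Y)) (0\<^sub>m (dim_row Y) (dim_col X)) Y"

definition hcat :: "'a::zero mat \<Rightarrow> 'a mat \<Rightarrow> 'a mat" where
  "hcat X Y = four_block_mat X Y (0\<^sub>m 0 (dim_col X)) (0\<^sub>m 0 (dim_col Y))"

definition vcat :: "'a::zero mat \<Rightarrow> 'a mat \<Rightarrow> 'a mat" where
  "vcat X Y = four_block_mat X (0\<^sub>m (dim_row X) 0) Y (0\<^sub>m (dim_row Y) 0)"

definition eig_mult :: "real mat \<Rightarrow> complex \<Rightarrow> nat" where
  "eig_mult M c = order c (char_poly (map_mat complex_of_real M))"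

definition cospectral :: "real mat \<Rightarrow> real mat \<Rightarrow> bool" where
  "cospectral X Y \<longleftrightarrow> square_mat X \<and> square_mat Y \<and> dim_row X = dim_row Y \<and> (\<forall>c. eig_mult X c = eig_mult Y c)"

end

theory Submission
  imports Defs
begin

lemma cp_block: fixes X :: "'a::idom mat"
  assumes X: "X \<in> carrier_mat n n" and Y: "Y \<in> carrier_mat m n" and Z: "Z \<in> carrier_mat m m"
  shows "char_poly (four_block_mat X (0\<^sub>m n m) Y Z) = char_poly X * char_poly Z"
proof -
  let ?cm = "\<lambda> A. [:0, 1:] \<cdot>\<^sub>m 1\<^sub>m (dim_row A) + map_mat (\<lambda>a. [:- a:]) A"
  have "char_poly (four_block_mat X (0\<^sub>m n m) Y Z) = det (?cm (four_block_mat X (0\<^sub>m n m) Y Z))"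
    unfolding char_poly_defs using X Z by simp
  also have "?cm (four_block_mat X (0\<^sub>m n m) Y Z) = four_block_mat (?cm X) (0\<^sub>m n m) (map_mat (\<lambda>a. [:- a:]) Y) (?cm Z)"
    by (rule eq_matI, insert X Y Z, auto simp: one_poly_def)
  also have "det \<dots> = det (?cm X) * det (?cm Z)"
    by (rule det_four_block_mat_upper_right_zero[OF _ refl], insert X Y Z, auto)
  also have "\<dots> = char_poly X * char_poly Z" unfolding char_poly_defs ..
  finally show ?thesis .
qed

lemma cp_dsum: fixes X :: "'a::idom mat"
  assumes X: "X \<in> carrier_mat n n" and Z: "Z \<in> carrier_mat m m"
  shows "char_poly (dsum X Z) = char_poly X * char_poly Z"
  unfolding dsum_def using cp_block[OF X _ Z, of "0\<^sub>m m n"] X Z by simp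

lemma cp_sim: fixes A :: "'a::comm_ring_1 mat"
  assumes "{A,B,P,Q} \<subseteq> carrier_mat n n" "P * Q = 1\<^sub>m n" "Q * P = 1\<^sub>m n" "A = P * B * Q"
  shows "char_poly A = char_poly B"
  by (rule char_poly_similar, rule similar_matI[OF assms])

lemma mult4: assumes "A1 \<in> carrier_mat a b" "B1 \<in> carrier_mat a c" "C1 \<in> carrier_mat d b" "D1 \<in> carrier_mat d c"
  "A2 \<in> carrier_mat b e" "B2 \<in> carrier_mat b f" "C2 \<in> carrier_mat c e" "D2 \<in> carrier_mat c f"
  shows "four_block_mat A1 B1 C1 D1 * four_block_mat A2 B2 C2 D2
  = four_block_mat (A1 * A2 + B1 * C2) (A1 * B2 + B1 * D2)
    (C1 * A2 + D1 * C2) (C1 * B2 + D1 * D2)"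
  by (rule mult_four_block_mat[OF assms])

lemma hcat_carrier[simp]: "X \<in> carrier_mat a b \<Longrightarrow> Y \<in> carrier_mat a c \<Longrightarrow> hcat X Y \<in> carrier_mat a (b+c)"
  unfolding hcat_def by auto

lemma vcat_carrier[simp]: "X \<in> carrier_mat a c \<Longrightarrow> Y \<in> carrier_mat b c \<Longrightarrow> vcat X Y \<in> carrier_mat (a+b) c"
  unfolding vcat_def by auto

lemma hcat_mult: assumes "X \<in> carrier_mat a b" "Y \<in> carrier_mat a c"
  "M1 \<in> carrier_mat b e" "M2 \<in> carrier_mat b f" "M3 \<in> carrier_mat c e" "M4 \<in> carrier_mat c f"
  shows "hcat X Y * four_block_mat M1 M2 M3 M4 = hcat (X*M1+Y*M3) (X*M2+Y*M4)"
  unfolding hcat_def using assms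
  by (subst mult4[where a=a and b=b and c=c and d=0 and e=e and f=f], auto intro!: eq_matI)

lemma four_vcat: assumes "M1 \<in> carrier_mat a b" "M2 \<in> carrier_mat a c" "M3 \<in> carrier_mat d b" "M4 \<in> carrier_mat d c"
  "X \<in> carrier_mat b e" "Y \<in> carrier_mat c e"
  shows "four_block_mat M1 M2 M3 M4 * vcat X Y = vcat (M1*X+M2*Y) (M3*X+M4*Y)"
  unfolding vcat_def using assms
  by (subst mult4[where a=a and b=b and c=c and d=d and e=e and f=0], auto intro!: eq_matI)

lemma dsum_carrier: "X \<in> carrier_mat a b \<Longrightarrow> Y \<in> carrier_mat c d \<Longrightarrow> dsum X Y \<in> carrier_mat (a+c) (b+d)"
  unfolding dsum_def by auto

lemma cp_swapG: fixes G :: "real mat"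
  assumes G: "G \<in> carrier_mat q q"
  shows "char_poly (four_block_mat (0\<^sub>m q q) G G (0\<^sub>m q q)) = char_poly G * char_poly (- G)"
proof -
  let ?P = "four_block_mat (1\<^sub>m q) (1\<^sub>m q) (1\<^sub>m q) (- 1\<^sub>m q) :: real mat"
  let ?Q = "four_block_mat ((1/2) \<cdot>\<^sub>m 1\<^sub>m q) ((1/2) \<cdot>\<^sub>m 1\<^sub>m q) ((1/2) \<cdot>\<^sub>m 1\<^sub>m q) (- ((1/2) \<cdot>\<^sub>m 1\<^sub>m q)) :: real mat"
  let ?D = "four_block_mat G (0\<^sub>m q q) (0\<^sub>m q q) (- G)"
  have "char_poly (four_block_mat (0\<^sub>m q q) G G (0\<^sub>m q q)) = char_poly ?D"
  proof (rule cp_sim)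
    show "{four_block_mat (0\<^sub>m q q) G G (0\<^sub>m q q), ?D, ?P, ?Q} \<subseteq> carrier_mat (q+q) (q+q)"
      using G by auto
    show "?P * ?Q = 1\<^sub>m (q+q)"
      apply (subst mult4[where a=q and b=q and c=q and d=q and e=q and f=q])
      using G apply (auto)
      apply (rule eq_matI) apply auto
      done
    show "?Q * ?P = 1\<^sub>m (q+q)" using G apply (simp add: mult4[where a=q and b=q and c=q and d=q and e=q and f=q])
      apply (rule eq_matI) apply auto done
    show "four_block_mat (0\<^sub>m q q) G G (0\<^sub>m q q) = ?P * ?D * ?Q" using G apply (simp add: mult4[where a=q and b=q and c=q and d=q and e=q and f=q])
      apply (rule eq_matI) apply auto done
  qed
  also have "\<dots> = char_poly G * char_poly (- G)" using cp_block[of G q "0\<^sub>m q q" q "- G"] G by simp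
  finally show ?thesis .
qed

lemma cp_A: fixes G X B C :: "real mat"
  assumes G: "G \<in> carrier_mat q q" and X: "X \<in> carrier_mat p p" and B: "B \<in> carrier_mat p q" and C: "C \<in> carrier_mat q p"
  shows "char_poly (four_block_mat X (hcat B B) (vcat C C) (four_block_mat (0\<^sub>m q q) G G (0\<^sub>m q q)))
     = char_poly (four_block_mat X (2 \<cdot>\<^sub>m B) C G) * char_poly (- G)"
proof -
  let ?P = "four_block_mat (1\<^sub>m q) (1\<^sub>m q) (1\<^sub>m q) (- 1\<^sub>m q) :: real mat"
  let ?Q = "four_block_mat ((1/2) \<cdot>\<^sub>m 1\<^sub>m q) ((1/2) \<cdot>\<^sub>m 1\<^sub>m q) ((1/2) \<cdot>\<^sub>m 1\<^sub>m q) (- ((1/2) \<cdot>\<^sub>m 1\<^sub>m q)) :: real mat"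
  let ?S = "four_block_mat (1\<^sub>m p) (0\<^sub>m p (q+q)) (0\<^sub>m (q+q) p) ?P"
  let ?Si = "four_block_mat (1\<^sub>m p) (0\<^sub>m p (q+q)) (0\<^sub>m (q+q) p) ?Q"
  let ?D = "four_block_mat G (0\<^sub>m q q) (0\<^sub>m q q) (- G)"
  let ?A = "four_block_mat X (hcat B B) (vcat C C) (four_block_mat (0\<^sub>m q q) G G (0\<^sub>m q q))"
  let ?A' = "four_block_mat X (hcat (2 \<cdot>\<^sub>m B) (0\<^sub>m p q)) (vcat C (0\<^sub>m q p)) ?D"
  have PQ: "?P * ?Q = 1\<^sub>m (q+q)" "?Q * ?P = 1\<^sub>m (q+q)"
    by (simp add: mult4[where a=q and b=q and c=q and d=q and e=q and f=q], rule eq_matI, auto)+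
  have "char_poly ?A = char_poly ?A'"
  proof (rule cp_sim)
    show "{?A, ?A', ?S, ?Si} \<subseteq> carrier_mat (p+(q+q)) (p+(q+q))"
      using G X B C by (auto simp: hcat_def vcat_def)
    show "?S * ?Si = 1\<^sub>m (p+(q+q))"
      using PQ apply (simp add: mult4[where a=p and b=p and c="q+q" and d="q+q" and e=p and f="q+q"])
      done
    show "?Si * ?S = 1\<^sub>m (p+(q+q))"
      using PQ by (simp add: mult4[where a=p and b=p and c="q+q" and d="q+q" and e=p and f="q+q"])
    show "?A = ?S * ?A' * ?Si"
    proof -
      have cP: "?P \<in> carrier_mat (q+q) (q+q)" and cQ: "?Q \<in> carrier_mat (q+q) (q+q)"
        and cD: "?D \<in> carrier_mat (q+q) (q+q)" and cG2: "four_block_mat (0\<^sub>m q q) G G (0\<^sub>m q q) \<in> carrier_mat (q+q) (q+q)"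
        using G by auto
      have cH1: "hcat B B \<in> carrier_mat p (q+q)" and cH2: "hcat (2 \<cdot>\<^sub>m B) (0\<^sub>m p q) \<in> carrier_mat p (q+q)"
        and cV1: "vcat C C \<in> carrier_mat (q+q) p" and cV2: "vcat C (0\<^sub>m q p) \<in> carrier_mat (q+q) p"
        using B C by auto
      have cB2: "2 \<cdot>\<^sub>m B \<in> carrier_mat p q" using B by auto
      note cs = G X B C cP cQ cD cG2 cH1 cH2 cV1 cV2 cB2
      have c1: "1\<^sub>m n \<in> carrier_mat n n" for n :: nat by simp
      have z: "0\<^sub>m n m \<in> carrier_mat n m" for n m :: nat by simp
      have cm1: "- 1\<^sub>m q \<in> carrier_mat q q" by simp
      have ch: "(1/2) \<cdot>\<^sub>m 1\<^sub>m q \<in> carrier_mat q q" "- ((1/2) \<cdot>\<^sub>m 1\<^sub>m q) \<in> carrier_mat q q" by auto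
      have cE: "four_block_mat G (- G) G G \<in> carrier_mat (q+q) (q+q)" using G by auto
      have f1: "?P * vcat C (0\<^sub>m q p) = vcat C C"
        by (subst four_vcat[OF c1 c1 c1 cm1 C z], insert C, simp)
      have f2: "?P * ?D = four_block_mat G (- G) G G"
        using G by (simp add: mult4[where a=q and b=q and c=q and d=q and e=q and f=q])
      have h: "(2 \<cdot>\<^sub>m B) * ((1/2) \<cdot>\<^sub>m 1\<^sub>m q) = B"
        by (subst mult_smult_distrib[OF cB2 c1], rule eq_matI, insert B, auto)
      have mz: "- 0\<^sub>m p q = (0\<^sub>m p q :: real mat)" by (rule eq_matI, auto)
      have f3: "hcat (2 \<cdot>\<^sub>m B) (0\<^sub>m p q) * ?Q = hcat B B"
        apply (subst hcat_mult[OF cB2 z ch(1) ch(1) ch(1) ch(2)])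
        using B h mz apply (simp add: hcat_def)
        done
      have hg: "G * ((1/2) \<cdot>\<^sub>m 1\<^sub>m q) = (1/2) \<cdot>\<^sub>m G"
        using mult_smult_distrib[OF G one_carrier_mat, of "1/2"] G by simp
      have hg1: "(1/2) \<cdot>\<^sub>m G + - ((1/2) \<cdot>\<^sub>m G) = 0\<^sub>m q q" using G by (intro eq_matI, auto)
      have hg2: "(1/2) \<cdot>\<^sub>m G + (1/2) \<cdot>\<^sub>m G = G" using G by (intro eq_matI, auto)
      have f4: "four_block_mat G (- G) G G * ?Q = four_block_mat (0\<^sub>m q q) G G (0\<^sub>m q q)"
        using G hg hg1 hg2 by (simp add: mult4[where a=q and b=q and c=q and d=q and e=q and f=q]; (rule eq_matI; auto)?)
  have e1: "?S * ?A' = four_block_mat X (hcat (2 \<cdot>\<^sub>m B) (0\<^sub>m p q)) (vcat C C) (four_block_mat G (- G) G G)"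
        apply (subst mult4[OF c1 z z cP X cH2 cV2 cD])
        using X cH2 cV2 cD f1 f2 left_mult_zero_mat[OF cD, of p] left_add_zero_mat[OF cV1] left_add_zero_mat[OF cE]
          right_add_zero_mat[OF cH2] apply simp
        done
      show ?thesis
        apply (subst e1)
        apply (subst mult4[OF X cH2 cV1 cE c1 z z cQ])
        using X cH2 cV1 cE f3 f4 left_add_zero_mat[OF cH1] right_mult_zero_mat[OF cE, of p] right_add_zero_mat[OF cV1] apply simp
        done
    qed
  qed
  also have "?A' = four_block_mat (four_block_mat X (2 \<cdot>\<^sub>m B) C G) (0\<^sub>m (p+q) q) (0\<^sub>m q (p+q)) (- G)"
    using G X B C by (intro eq_matI, auto simp: hcat_def vcat_def)
  also have "char_poly \<dots> = char_poly (four_block_mat X (2 \<cdot>\<^sub>m B) C G) * char_poly (- G)"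
    by (rule cp_block, insert G X B C, auto)
  finally show ?thesis .
qed

lemma cp_M: fixes G X B C :: "real mat"
  assumes G: "G \<in> carrier_mat q q" and X: "X \<in> carrier_mat p p" and B: "B \<in> carrier_mat p q" and C: "C \<in> carrier_mat q p"
  shows "char_poly (four_block_mat X (2 \<cdot>\<^sub>m B) C G) = char_poly (four_block_mat G (2 \<cdot>\<^sub>m C) B X)"
proof (rule cp_sim)
  let ?P = "four_block_mat (0\<^sub>m p q) (1\<^sub>m p) ((1/2) \<cdot>\<^sub>m 1\<^sub>m q) (0\<^sub>m q p) :: real mat"
  let ?Q = "four_block_mat (0\<^sub>m q p) (2 \<cdot>\<^sub>m 1\<^sub>m q) (1\<^sub>m p) (0\<^sub>m p q) :: real mat"
  let ?M = "four_block_mat X (2 \<cdot>\<^sub>m B) C G"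
  let ?M' = "four_block_mat G (2 \<cdot>\<^sub>m C) B X"
  have c1: "1\<^sub>m n \<in> carrier_mat n n" for n :: nat by simp
  have z: "0\<^sub>m n m \<in> carrier_mat n m" for n m :: nat by simp
  have ch: "(1/2) \<cdot>\<^sub>m 1\<^sub>m q \<in> carrier_mat q q" "2 \<cdot>\<^sub>m 1\<^sub>m q \<in> carrier_mat q q" by auto
  have cB: "2 \<cdot>\<^sub>m B \<in> carrier_mat p q" and cC: "2 \<cdot>\<^sub>m C \<in> carrier_mat q p" using B C by auto
  have comm: "q + p = p + q" by simp
  show "{?M, ?M', ?P, ?Q} \<subseteq> carrier_mat (p+q) (p+q)"
    using G X B C by (auto simp: comm)
  have hh: "(1/2) \<cdot>\<^sub>m 1\<^sub>m q * (2 \<cdot>\<^sub>m 1\<^sub>m q) = (1\<^sub>m q :: real mat)"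
    by (rule eq_matI, auto)
  have hh': "(2 \<cdot>\<^sub>m 1\<^sub>m q) * ((1/2) \<cdot>\<^sub>m 1\<^sub>m q) = (1\<^sub>m q :: real mat)"
    by (rule eq_matI, auto)
  show "?P * ?Q = 1\<^sub>m (p+q)"
    apply (subst mult4[OF z c1 ch(1) z z ch(2) c1 z])
    using hh apply simp
    done
  show "?Q * ?P = 1\<^sub>m (p+q)"
    apply (subst mult4[OF z ch(2) c1 z z c1 ch(1) z])
    using hh' apply simp
    apply (subst add.commute[of q p], rule refl)
    done
  have k1: "((1/2) \<cdot>\<^sub>m 1\<^sub>m q) * G = (1/2) \<cdot>\<^sub>m G"
    using mult_smult_assoc_mat[OF one_carrier_mat G, of "1/2"] G by simp
  have "((1/2) \<cdot>\<^sub>m 1\<^sub>m q) * (2 \<cdot>\<^sub>m C) = (1/2) \<cdot>\<^sub>m (2 \<cdot>\<^sub>m C)"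
    using mult_smult_assoc_mat[OF one_carrier_mat cC, of "1/2"] left_mult_one_mat[OF cC] by simp
  also have "\<dots> = C" using C by (intro eq_matI, auto)
  finally have k2: "((1/2) \<cdot>\<^sub>m 1\<^sub>m q) * (2 \<cdot>\<^sub>m C) = C" .
  have e1: "?P * ?M' = four_block_mat B X ((1/2) \<cdot>\<^sub>m G) C"
    apply (subst mult4[OF z c1 ch(1) z G cC B X])
    using G X B C k1 k2 cC apply simp
    done
  have cG: "(1/2) \<cdot>\<^sub>m G \<in> carrier_mat q q" using G by simp
  have m1: "B * (2 \<cdot>\<^sub>m 1\<^sub>m q) = 2 \<cdot>\<^sub>m B"
    using mult_smult_distrib[OF B one_carrier_mat, of 2] right_mult_one_mat[OF B] by simp
  have "((1/2) \<cdot>\<^sub>m G) * (2 \<cdot>\<^sub>m 1\<^sub>m q) = 2 \<cdot>\<^sub>m ((1/2) \<cdot>\<^sub>m G)"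
    using mult_smult_distrib[OF cG one_carrier_mat, of 2] right_mult_one_mat[OF cG] by simp
  also have "\<dots> = G" using G by (intro eq_matI, auto)
  finally have m2: "((1/2) \<cdot>\<^sub>m G) * (2 \<cdot>\<^sub>m 1\<^sub>m q) = G" .
  show "?M = ?P * ?M' * ?Q"
    apply (subst e1)
    apply (subst mult4[OF B X cG C z ch(2) c1 z])
    using m1 m2 right_mult_zero_mat[OF B] right_mult_zero_mat[OF X] right_mult_zero_mat[OF cG] right_mult_zero_mat[OF C]
      right_mult_one_mat[OF X] right_mult_one_mat[OF C] G X B C apply simp
    done
qed


theorem theorem3p8:
  fixes B G G' :: "real mat" and p q :: nat
  assumes "B \<in> carrier_mat p q"
    and "G \<in> carrier_mat q q" and "transpose_mat G = G"
    and "G' \<in> carrier_mat p p" and "transpose_mat G' = G'"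
  shows "cospectral
    (dsum (dsum
      (four_block_mat G' (hcat B B) (vcat (transpose_mat B) (transpose_mat B))
         (four_block_mat (0\<^sub>m q q) G G (0\<^sub>m q q)))
      (four_block_mat (0\<^sub>m p p) G' G' (0\<^sub>m p p))) G)
    (dsum (dsum
      (four_block_mat G (hcat (transpose_mat B) (transpose_mat B)) (vcat B B)
         (four_block_mat (0\<^sub>m p p) G' G' (0\<^sub>m p p)))
      (four_block_mat (0\<^sub>m q q) G G (0\<^sub>m q q))) G')"
proof -
  have B: "B \<in> carrier_mat p q" and G: "G \<in> carrier_mat q q" and G': "G' \<in> carrier_mat p p"
    using assms by auto
  have Bt: "transpose_mat B \<in> carrier_mat q p" using B by simp
  define A where "A = four_block_mat G' (hcat B B) (vcat (transpose_mat B) (transpose_mat B))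
         (four_block_mat (0\<^sub>m q q) G G (0\<^sub>m q q))"
  define C where "C = four_block_mat G (hcat (transpose_mat B) (transpose_mat B)) (vcat B B)
         (four_block_mat (0\<^sub>m p p) G' G' (0\<^sub>m p p))"
  define L1 where "L1 = four_block_mat (0\<^sub>m p p) G' G' (0\<^sub>m p p)"
  define L2 where "L2 = four_block_mat (0\<^sub>m q q) G G (0\<^sub>m q q)"
  define LHS where "LHS = dsum (dsum A L1) G"
  define RHS where "RHS = dsum (dsum C L2) G'"
  have cA: "A \<in> carrier_mat (p+(q+q)) (p+(q+q))" unfolding A_def using B G G' by auto
  have cC: "C \<in> carrier_mat (q+(p+p)) (q+(p+p))" unfolding C_def using B G G' by auto
  have cL1: "L1 \<in> carrier_mat (p+p) (p+p)" unfolding L1_def using G' by auto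
  have cL2: "L2 \<in> carrier_mat (q+q) (q+q)" unfolding L2_def using G by auto
  have cD1: "dsum A L1 \<in> carrier_mat (p+(q+q)+(p+p)) (p+(q+q)+(p+p))" using dsum_carrier[OF cA cL1] .
  have cD2: "dsum C L2 \<in> carrier_mat (q+(p+p)+(q+q)) (q+(p+p)+(q+q))" using dsum_carrier[OF cC cL2] .
  have n: "p+(q+q)+(p+p)+q = q+(p+p)+(q+q)+p" by simp
  have cLHS: "LHS \<in> carrier_mat (p+(q+q)+(p+p)+q) (p+(q+q)+(p+p)+q)" unfolding LHS_def using dsum_carrier[OF cD1 G] .
  have cRHS: "RHS \<in> carrier_mat (p+(q+q)+(p+p)+q) (p+(q+q)+(p+p)+q)" unfolding RHS_def n using dsum_carrier[OF cD2 G'] .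
  have cpA: "char_poly A = char_poly (four_block_mat G' (2 \<cdot>\<^sub>m B) (transpose_mat B) G) * char_poly (- G)"
    unfolding A_def by (rule cp_A[OF G G' B Bt])
  have cpC: "char_poly C = char_poly (four_block_mat G (2 \<cdot>\<^sub>m transpose_mat B) B G') * char_poly (- G')"
    unfolding C_def by (rule cp_A[OF G' G Bt B])
  have cpM: "char_poly (four_block_mat G' (2 \<cdot>\<^sub>m B) (transpose_mat B) G) = char_poly (four_block_mat G (2 \<cdot>\<^sub>m transpose_mat B) B G')"
    by (rule cp_M[OF G G' B Bt])
  have cpL1: "char_poly L1 = char_poly G' * char_poly (- G')" unfolding L1_def by (rule cp_swapG[OF G'])
  have cpL2: "char_poly L2 = char_poly G * char_poly (- G)" unfolding L2_def by (rule cp_swapG[OF G])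
  have "char_poly LHS = char_poly A * char_poly L1 * char_poly G"
    unfolding LHS_def by (simp add: cp_dsum[OF cD1 G] cp_dsum[OF cA cL1])
  also have "\<dots> = char_poly C * char_poly L2 * char_poly G'"
    unfolding cpA cpC cpM cpL1 cpL2 by (simp add: ac_simps)
  also have "\<dots> = char_poly RHS"
    unfolding RHS_def by (simp add: cp_dsum[OF cD2 G'] cp_dsum[OF cC cL2])
  finally have eq: "char_poly LHS = char_poly RHS" .
  have "char_poly (map_mat complex_of_real LHS) = char_poly (map_mat complex_of_real RHS)"
    using of_real_hom.char_poly_hom[OF cLHS] of_real_hom.char_poly_hom[OF cRHS] eq by metis
  hence "cospectral LHS RHS"
    unfolding cospectral_def eig_mult_def using cLHS cRHS by auto
  thus ?thesis unfolding LHS_def RHS_def A_def C_def L1_def L2_def .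
qed

end
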